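(* Let $n\geq 2$ and $q=p^h>2$ with $p$ prime, and put $N=h(n-1)$. Let $B$ be a minimal blocking set with respect to lines in $PG(n,q)$. Suppose there are $p^N-p^{N-1}+1$ distinct points $R_i\in B$ such that every line through $R_i$ either meets $B$ only in $R_i$ or is entirely contained in $B$. Then $B$ is a hyperplane of $PG(n,q)$.
   Context: A blocking set with respect to lines is a set of points meeting every line. It is minimal if no proper subset is a blocking set. *)

theory Defs
  imports "HOL-Computational_Algebra.Primes"
begin

text \<open>Vectors of F^(n+1) are functions nat => F vanishing outside {..n}.
  A point is a 1-dimensional subspace, represented as its set of vectors.\<close>

definition pg_vecs :: "nat \<Rightarrow> (nat \<Rightarrow> 'a::field) set" where
  "pg_vecs n = {v. \<forall>i>n. v i = 0}"

definition pg_span1 :: "(nat \<Rightarrow> 'a::field) \<Rightarrow> (nat \<Rightarrow> 'a) set" where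
  "pg_span1 v = {(\<lambda>i. c * v i) | c. True}"

definition pg_span2 :: "(nat \<Rightarrow> 'a::field) \<Rightarrow> (nat \<Rightarrow> 'a) \<Rightarrow> (nat \<Rightarrow> 'a) set" where
  "pg_span2 u w = {(\<lambda>i. a * u i + b * w i) | a b. True}"

definition pg_points :: "nat \<Rightarrow> (nat \<Rightarrow> 'a::field) set set" where
  "pg_points n = {pg_span1 v | v. v \<in> pg_vecs n \<and> v \<noteq> (\<lambda>_. 0)}"

definition pg_lines :: "nat \<Rightarrow> (nat \<Rightarrow> 'a::field) set set set" where
  "pg_lines n = {{P \<in> pg_points n. P \<subseteq> pg_span2 u w} | u w.
      u \<in> pg_vecs n \<and> w \<in> pg_vecs n \<and> pg_span1 u \<noteq> pg_span1 w \<and> u \<noteq> (\<lambda>_. 0) \<and> w \<noteq> (\<lambda>_. 0)}"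

definition pg_hyperplanes :: "nat \<Rightarrow> (nat \<Rightarrow> 'a::field) set set set" where
  "pg_hyperplanes n = {{P \<in> pg_points n. P \<subseteq> {v. (\<Sum>i\<le>n. c i * v i) = 0}} | c.
      (\<exists>i\<le>n. c i \<noteq> 0)}"

definition blocking_set :: "nat \<Rightarrow> (nat \<Rightarrow> 'a::field) set set \<Rightarrow> bool" where
  "blocking_set n B \<longleftrightarrow> B \<subseteq> pg_points n \<and> (\<forall>L \<in> pg_lines n. L \<inter> B \<noteq> {})"

definition minimal_blocking_set :: "nat \<Rightarrow> (nat \<Rightarrow> 'a::field) set set \<Rightarrow> bool" where
  "minimal_blocking_set n B \<longleftrightarrow> blocking_set n B \<and> (\<forall>B'. B' \<subset> B \<longrightarrow> \<not> blocking_set n B')"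

end

theory Submission
  imports Defs
begin

lemma span1_mem: "x \<in> pg_span1 v \<longleftrightarrow> (\<exists>c. x = (\<lambda>i. c * v i))"
  by (auto simp: pg_span1_def)

lemma span1_self: "v \<in> pg_span1 v"
  unfolding span1_mem by (intro exI[of _ 1]) simp

lemma span1_zero: "(\<lambda>_. 0) \<in> pg_span1 v"
  unfolding span1_mem by (intro exI[of _ 0]) simp

lemma span1_scale:
  fixes v :: "nat \<Rightarrow> 'a::field"
  assumes "c \<noteq> 0" shows "pg_span1 (\<lambda>i. c * v i) = pg_span1 v"
proof
  show "pg_span1 (\<lambda>i. c * v i) \<subseteq> pg_span1 v"
  proof
    fix x assume "x \<in> pg_span1 (\<lambda>i. c * v i)"
    then obtain d where "x = (\<lambda>i. d * (c * v i))" unfolding span1_mem by blast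
    then have "x = (\<lambda>i. (d*c) * v i)" by (simp add: mult.assoc)
    then show "x \<in> pg_span1 v" unfolding span1_mem by blast
  qed
  show "pg_span1 v \<subseteq> pg_span1 (\<lambda>i. c * v i)"
  proof
    fix x assume "x \<in> pg_span1 v"
    then obtain d where "x = (\<lambda>i. d * v i)" unfolding span1_mem by blast
    then have "x = (\<lambda>i. (d/c) * (c * v i))" using assms by simp
    then show "x \<in> pg_span1 (\<lambda>i. c * v i)" unfolding span1_mem by blast
  qed
qed

lemma span1_eq:
  fixes u :: "nat \<Rightarrow> 'a::field"
  assumes "x \<in> pg_span1 u" "x \<noteq> (\<lambda>_. 0)" shows "pg_span1 x = pg_span1 u"
proof -
  obtain c where c: "x = (\<lambda>i. c * u i)" using assms(1) unfolding span1_mem by blast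
  with assms(2) have "c \<noteq> 0" by auto
  with c span1_scale show ?thesis by metis
qed

lemma card_span1:
  fixes v :: "nat \<Rightarrow> 'a::{field,finite}"
  assumes "v \<noteq> (\<lambda>_. 0)" shows "card (pg_span1 v) = card (UNIV::'a set)"
proof -
  obtain k where k: "v k \<noteq> 0" using assms by auto
  have eq: "pg_span1 v = range (\<lambda>c. (\<lambda>i. c * v i))" by (auto simp: pg_span1_def)
  have "inj (\<lambda>c. (\<lambda>i. c * v i))"
  proof (rule injI)
    fix c d assume "(\<lambda>i. c * v i) = (\<lambda>i. d * v i)"
    then have "c * v k = d * v k" by metis
    with k show "c = d" by simp
  qed
  then show ?thesis unfolding eq by (simp add: card_image)
qed

lemma vecs_fin:
  "finite (pg_vecs n :: (nat\<Rightarrow>'a::{field,finite}) set) \<and>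
   card (pg_vecs n :: (nat\<Rightarrow>'a) set) \<le> card (UNIV::'a set) ^ (Suc n)"
proof -
  let ?L = "{xs. set xs \<subseteq> (UNIV::'a set) \<and> length xs = Suc n}"
  have inj: "inj_on (\<lambda>v. map v [0..<Suc n]) (pg_vecs n :: (nat\<Rightarrow>'a) set)"
  proof (rule inj_onI)
    fix v w :: "nat \<Rightarrow> 'a" assume v: "v \<in> pg_vecs n" and w: "w \<in> pg_vecs n"
      and e: "map v [0..<Suc n] = map w [0..<Suc n]"
    show "v = w"
    proof
      fix i show "v i = w i"
      proof (cases "i \<le> n")
        case True
        have "\<forall>x\<in>set [0..<Suc n]. v x = w x" using e by (simp only: map_eq_conv)
        then show ?thesis using True by (simp del: upt_Suc)
      next
        case False then show ?thesis using v w by (simp add: pg_vecs_def)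
      qed
    qed
  qed
  have sub: "(\<lambda>v. map v [0..<Suc n]) ` (pg_vecs n :: (nat\<Rightarrow>'a) set) \<subseteq> ?L"
    by auto
  have fin: "finite ?L" by (rule finite_lists_length_eq) simp
  have c: "card ?L = card (UNIV::'a set) ^ (Suc n)"
    by (rule card_lists_length_eq) simp
  have "finite (pg_vecs n :: (nat\<Rightarrow>'a) set)"
    using finite_imageD[OF finite_subset[OF sub fin] inj] .
  moreover have "card (pg_vecs n :: (nat\<Rightarrow>'a) set) \<le> card (UNIV::'a set) ^ (Suc n)"
    using card_inj_on_le[OF inj sub fin] c by simp
  ultimately show ?thesis by blast
qed

lemma span1_sub_span2: "pg_span1 (\<lambda>i. a * u i + b * w i) \<subseteq> pg_span2 u (w :: nat \<Rightarrow> 'a::field)"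
proof
  fix y assume "y \<in> pg_span1 (\<lambda>i. a * u i + b * w i)"
  then obtain d where d: "y = (\<lambda>i. d * (a * u i + b * w i))" unfolding span1_mem by blast
  have "y = (\<lambda>i. (d*a) * u i + (d*b) * w i)" unfolding d by (rule ext) (simp add: algebra_simps)
  then show "y \<in> pg_span2 u w" unfolding pg_span2_def by blast
qed

lemma span1_pt: "v \<in> pg_vecs n \<Longrightarrow> v \<noteq> (\<lambda>_. 0) \<Longrightarrow> pg_span1 v \<in> pg_points n"
  unfolding pg_points_def by blast

theorem lemmaN2:
  fixes B :: "(nat \<Rightarrow> 'a::{field,finite}) set set"
    and n p h N :: nat
  assumes "n \<ge> 2"
    and "prime p" and "card (UNIV :: 'a set) = p ^ h" and "p ^ h > 2"
    and "N = h * (n - 1)"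
    and "minimal_blocking_set n B"
    and "\<exists>R \<subseteq> B. card R = p ^ N - p ^ (N - 1) + 1 \<and>
           (\<forall>r \<in> R. \<forall>L \<in> pg_lines n. r \<in> L \<longrightarrow> L \<inter> B = {r} \<or> L \<subseteq> B)"
  shows "B \<in> pg_hyperplanes n"
proof -
  define q where "q = p ^ h"
  have q3: "q \<ge> 3" using assms(4) q_def by simp
  have cardF: "card (UNIV::'a set) = q" using assms(3) q_def by simp
  from assms(7) obtain R where RB: "R \<subseteq> B" and cR: "card R = p ^ N - p ^ (N - 1) + 1"
    and Rprop: "\<forall>r \<in> R. \<forall>L \<in> pg_lines n. r \<in> L \<longrightarrow> L \<inter> B = {r} \<or> L \<subseteq> B" by blast
  have Bpts: "B \<subseteq> pg_points n" and minB: "\<forall>B'. B' \<subset> B \<longrightarrow> \<not> blocking_set n B'"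
    using assms(6) unfolding minimal_blocking_set_def blocking_set_def by auto
  define Z :: "nat \<Rightarrow> 'a" where "Z = (\<lambda>_. 0)"
  define C where "C = {v \<in> pg_vecs n. v = Z \<or> pg_span1 v \<in> B}"
  define W where "W = {u \<in> C. \<forall>w\<in>C. \<forall>a b. (\<lambda>i. a * u i + b * w i) \<in> C}"
  have vecs_lin: "\<And>u v a b. u \<in> pg_vecs n \<Longrightarrow> v \<in> pg_vecs n \<Longrightarrow> (\<lambda>i. a * u i + b * v i) \<in> pg_vecs n"
    by (simp add: pg_vecs_def)
  have Cvecs: "C \<subseteq> pg_vecs n" unfolding C_def by auto
  have C0: "Z \<in> C" unfolding C_def Z_def by (simp add: pg_vecs_def)
  have Cscale: "\<And>v c. v \<in> C \<Longrightarrow> (\<lambda>i. c * v i) \<in> C"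
  proof -
    fix v c assume v: "v \<in> C"
    show "(\<lambda>i. c * v i) \<in> C"
    proof (cases "c = 0 \<or> v = Z")
      case True
      then have "(\<lambda>i. c * v i) = Z" unfolding Z_def by auto
      then show ?thesis using C0 by simp
    next
      case False
      then have "pg_span1 (\<lambda>i. c * v i) = pg_span1 v" by (simp add: span1_scale)
      moreover have "(\<lambda>i. c * v i) \<in> pg_vecs n" using v Cvecs by (auto simp: pg_vecs_def)
      ultimately show ?thesis using v False unfolding C_def by auto
    qed
  qed
  have CB: "\<And>v. v \<in> C \<Longrightarrow> v \<noteq> Z \<Longrightarrow> pg_span1 v \<in> B" unfolding C_def by auto
  have W0: "Z \<in> W"
  proof -
    have "\<And>w a b. w \<in> C \<Longrightarrow> (\<lambda>i. a * Z i + b * w i) \<in> C"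
      using Cscale unfolding Z_def by simp
    then show ?thesis unfolding W_def using C0 by blast
  qed
  have WC: "W \<subseteq> C" unfolding W_def by auto
  have Wv: "\<And>u w a b. u \<in> W \<Longrightarrow> w \<in> C \<Longrightarrow> (\<lambda>i. a * u i + b * w i) \<in> C"
    unfolding W_def by blast
  have Wlin: "\<And>u v a b. u \<in> W \<Longrightarrow> v \<in> W \<Longrightarrow> (\<lambda>i. a * u i + b * v i) \<in> W"
  proof -
    fix u v a b assume u: "u \<in> W" and v: "v \<in> W"
    have xC: "(\<lambda>i. a * u i + b * v i) \<in> C"
    proof -
      have "(\<lambda>i. b * v i) \<in> C" using v WC Cscale by blast
      from Wv[OF u this, of a 1] show ?thesis by simp
    qed
    have "\<forall>w\<in>C. \<forall>c d. (\<lambda>i. c * (a * u i + b * v i) + d * w i) \<in> C"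
    proof (intro ballI allI)
      fix w c d assume w: "w \<in> C"
      have "(\<lambda>i. (c*b) * v i + d * w i) \<in> C" using Wv[OF v w] by blast
      from Wv[OF u this, of "c*a" 1]
      have "(\<lambda>i. (c*a) * u i + 1 * (\<lambda>i. (c*b) * v i + d * w i) i) \<in> C" by simp
      moreover have "(\<lambda>i. (c*a) * u i + 1 * (\<lambda>i. (c*b) * v i + d * w i) i)
          = (\<lambda>i. c * (a * u i + b * v i) + d * w i)"
        by (rule ext) (simp add: algebra_simps)
      ultimately show "(\<lambda>i. c * (a * u i + b * v i) + d * w i) \<in> C" by simp
    qed
    then show "(\<lambda>i. a * u i + b * v i) \<in> W" using xC unfolding W_def by simp
  qed
  have Wscale: "\<And>u c. u \<in> W \<Longrightarrow> (\<lambda>i. c * u i) \<in> W"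
  proof -
    fix u c assume u: "u \<in> W"
    from Wlin[OF u W0, of c 0] show "(\<lambda>i. c * u i) \<in> W" by simp
  qed
  have Wvecs: "W \<subseteq> pg_vecs n" using WC Cvecs by auto
  have finvecs: "finite (pg_vecs n :: (nat\<Rightarrow>'a) set)"
    and cardvecs: "card (pg_vecs n :: (nat\<Rightarrow>'a) set) \<le> q ^ Suc n"
    using vecs_fin[where 'a='a, of n] cardF by auto
  have finW: "finite W" using finite_subset[OF Wvecs finvecs] .
  have Rvert: "\<And>r. r \<in> R \<Longrightarrow> \<exists>u. u \<in> W \<and> u \<noteq> Z \<and> r = pg_span1 u"
  proof -
    fix r assume r: "r \<in> R"
    then have "r \<in> pg_points n" using RB Bpts by auto
    then obtain u where u: "u \<in> pg_vecs n" "u \<noteq> Z" "r = pg_span1 u"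
      unfolding pg_points_def Z_def by auto
    have uC: "u \<in> C" using u r RB unfolding C_def by auto
    have "\<forall>w\<in>C. \<forall>a b. (\<lambda>i. a * u i + b * w i) \<in> C"
    proof (intro ballI allI)
      fix w a b assume w: "w \<in> C"
      have wv: "w \<in> pg_vecs n" using w Cvecs by auto
      define x where "x = (\<lambda>i. a * u i + b * w i)"
      have xv: "x \<in> pg_vecs n" using vecs_lin u(1) wv x_def by auto
      have "x \<in> C"
      proof (cases "x = Z")
        case True then show ?thesis using C0 by simp
      next
        case xnz: False
        show ?thesis
        proof (cases "w = Z \<or> pg_span1 w = pg_span1 u")
          case True
          have "\<exists>c. w = (\<lambda>i. c * u i)"
          proof (cases "w = Z")
            case True then show ?thesis by (intro exI[of _ 0]) (simp add: Z_def)
          next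
            case False then have "pg_span1 w = pg_span1 u" using True by simp
            then have "w \<in> pg_span1 u" using span1_self[of w] by simp
            then show ?thesis unfolding span1_mem .
          qed
          then obtain c where c: "w = (\<lambda>i. c * u i)" by blast
          then have "x = (\<lambda>i. (a + b*c) * u i)" unfolding x_def by (auto simp: algebra_simps)
          then show ?thesis using Cscale[OF uC] by simp
        next
          case False
          define L where "L = {P \<in> pg_points n. P \<subseteq> pg_span2 u w}"
          have L: "L \<in> pg_lines n" unfolding L_def pg_lines_def using u wv False
            unfolding Z_def by blast
          have rL: "r \<in> L" unfolding L_def using span1_sub_span2[of 1 u 0 w] u span1_pt[of u n]
            unfolding Z_def by simp
          have wL: "pg_span1 w \<in> L" unfolding L_def using span1_sub_span2[of 0 u 1 w] wv False
              span1_pt[of w n] unfolding Z_def by simp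
          have wB: "pg_span1 w \<in> B" using CB w False by blast
          have "pg_span1 w \<noteq> r" using False u(3) by auto
          then have "L \<inter> B \<noteq> {r}" using wL wB by blast
          then have LB: "L \<subseteq> B" using Rprop r L rL by blast
          have "pg_span1 x \<in> L" unfolding L_def x_def using span1_sub_span2[of a u b w] xv xnz
              span1_pt[of x n] unfolding Z_def x_def by simp
          then show ?thesis using LB xv unfolding C_def by blast
        qed
      qed
      then show "(\<lambda>i. a * u i + b * w i) \<in> C" by (simp add: x_def)
    qed
    then have "u \<in> W" using uC unfolding W_def by blast
    then show "\<exists>u. u \<in> W \<and> u \<noteq> Z \<and> r = pg_span1 u" using u by blast
  qed
  have Rsub: "\<And>r. r \<in> R \<Longrightarrow> r \<subseteq> W"
  proof
    fix r y assume r: "r \<in> R" and y: "y \<in> r"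
    obtain u where u: "u \<in> W" "r = pg_span1 u" using Rvert[OF r] by blast
    have "y \<in> pg_span1 u" using y u by simp
    then obtain c where "y = (\<lambda>i. c * u i)" unfolding span1_mem by blast
    then show "y \<in> W" using Wscale[OF u(1)] by simp
  qed
  have finR: "finite R"
  proof -
    have "card R \<noteq> 0" by (simp add: cR)
    then show ?thesis by (meson card.infinite)
  qed
  have cardr: "\<And>r. r \<in> R \<Longrightarrow> card (r - {Z}) = q - 1"
  proof -
    fix r assume r: "r \<in> R"
    obtain u where u: "u \<in> W" "u \<noteq> Z" "r = pg_span1 u" using Rvert[OF r] by blast
    have "card r = q" using card_span1[of u] u cardF unfolding Z_def by simp
    moreover have "Z \<in> r" using u span1_zero unfolding Z_def by simp
    moreover have "finite r" using finite_subset[OF Rsub[OF r] finW] .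
    ultimately show "card (r - {Z}) = q - 1" by simp
  qed
  have disj: "\<forall>r\<in>R. \<forall>s\<in>R. r \<noteq> s \<longrightarrow> (r - {Z}) \<inter> (s - {Z}) = {}"
  proof (intro ballI impI)
    fix r s assume r: "r \<in> R" and s: "s \<in> R" and rs: "r \<noteq> s"
    show "(r - {Z}) \<inter> (s - {Z}) = {}"
    proof (rule ccontr)
      assume "(r - {Z}) \<inter> (s - {Z}) \<noteq> {}"
      then obtain x where x: "x \<in> r" "x \<in> s" "x \<noteq> Z" by blast
      obtain u where u: "r = pg_span1 u" using Rvert[OF r] by blast
      obtain v where v: "s = pg_span1 v" using Rvert[OF s] by blast
      have "pg_span1 x = r" using span1_eq[of x u] x u unfolding Z_def by simp
      moreover have "pg_span1 x = s" using span1_eq[of x v] x v unfolding Z_def by simp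
      ultimately show False using rs by simp
    qed
  qed
  have "card (\<Union>r\<in>R. r - {Z}) = (\<Sum>r\<in>R. card (r - {Z}))"
  proof -
    have finr: "\<And>r. r \<in> R \<Longrightarrow> finite r" using Rsub finW by (meson finite_subset)
    show ?thesis using finR finr disj by (intro card_UN_disjoint) auto
  qed
  also have "\<dots> = card R * (q - 1)" using cardr by simp
  finally have cU: "card (\<Union>r\<in>R. r - {Z}) = card R * (q - 1)" .
  have "(\<Union>r\<in>R. r - {Z}) \<subseteq> W - {Z}" using Rsub by blast
  then have "card (\<Union>r\<in>R. r - {Z}) \<le> card (W - {Z})" using finW by (intro card_mono) auto
  also have "\<dots> = card W - 1" using W0 finW by simp
  finally have cW1: "card R * (q - 1) + 1 \<le> card W" using cU W0 finW
    by (metis One_nat_def Suc_leI card_gt_0_iff empty_iff le_diff_conv2)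
  have h1: "h \<ge> 1" using assms(4) by (cases h) auto
  have N1: "N \<ge> 1" using h1 assms(1,5) by simp
  have qN: "q ^ (n - 1) = p ^ N" by (simp add: q_def assms(5) power_mult)
  have p2: "p \<ge> 2" using assms(2) prime_ge_2_nat by blast
  define M where "M = p ^ (N - 1)"
  have pN: "p ^ N = p * M" unfolding M_def using N1 by (metis Suc_diff_1 less_le_trans zero_less_one power_Suc)
  have cR2: "card R = (p - 1) * M + 1" using cR pN unfolding M_def[symmetric] by (simp add: diff_mult_distrib)
  have "p * M \<le> 2 * (p - 1) * M" using p2 by (intro mult_le_mono1) arith
  also have "\<dots> < (q - 1) * ((p - 1) * M + 1) + 1"
  proof -
    have "2 * ((p - 1) * M + 1) \<le> (q - 1) * ((p - 1) * M + 1)" using q3 by (intro mult_le_mono1) arith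
    then show ?thesis by simp
  qed
  finally have bigW: "q ^ (n - 1) < card W" using cW1 cR2 qN pN by (simp add: mult.commute)
  have Wminus: "\<And>u v. u \<in> W \<Longrightarrow> v \<in> W \<Longrightarrow> (\<lambda>i. u i - v i) \<in> W"
  proof -
    fix u v assume "u \<in> W" "v \<in> W"
    from Wlin[OF this, of 1 "-1"] show "(\<lambda>i. u i - v i) \<in> W" by simp
  qed
  have key: "\<And>a z. a \<in> pg_vecs n \<Longrightarrow> z \<in> pg_vecs n \<Longrightarrow> z \<notin> W \<Longrightarrow>
      \<exists>l. (\<lambda>i. a i - l * z i) \<in> W"
  proof (rule ccontr)
    fix a z assume a: "a \<in> pg_vecs n" and z: "z \<in> pg_vecs n" and zW: "z \<notin> W"
      and no: "\<not> (\<exists>l. (\<lambda>i. a i - l * z i) \<in> W)"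
    define \<phi> where "\<phi> = (\<lambda>(s::'a, t::'a, w::nat\<Rightarrow>'a). (\<lambda>i. s * a i + t * z i + w i))"
    have inj: "inj_on \<phi> (UNIV \<times> UNIV \<times> W)"
    proof (rule inj_onI)
      fix x y assume x: "x \<in> UNIV \<times> UNIV \<times> W" and y: "y \<in> UNIV \<times> UNIV \<times> W" and e: "\<phi> x = \<phi> y"
      obtain s t w where xs: "x = (s, t, w)" and w: "w \<in> W" using x by auto
      obtain s' t' w' where ys: "y = (s', t', w')" and w': "w' \<in> W" using y by auto
      have eq: "\<And>i. s * a i + t * z i + w i = s' * a i + t' * z i + w' i"
        using e unfolding xs ys \<phi>_def by (simp add: fun_eq_iff)
      have dW: "(\<lambda>i. w' i - w i) \<in> W" using Wminus[OF w' w] .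
      have ss: "s = s'"
      proof (rule ccontr)
        assume ne: "s \<noteq> s'"
        then have ne': "s - s' \<noteq> 0" by simp
        have "(\<lambda>i. a i - (-(t - t') / (s - s')) * z i) = (\<lambda>i. (1 / (s - s')) * (w' i - w i))"
        proof
          fix i
          have "(s - s') * a i + (t - t') * z i = w' i - w i" using eq[of i] by (simp add: algebra_simps)
          then show "a i - (-(t - t') / (s - s')) * z i = (1 / (s - s')) * (w' i - w i)"
            using ne' by (simp add: field_simps)
        qed
        moreover have "(\<lambda>i. (1 / (s - s')) * (w' i - w i)) \<in> W" using Wscale[OF dW] .
        ultimately show False using no by metis
      qed
      have tt: "t = t'"
      proof (rule ccontr)
        assume ne: "t \<noteq> t'"
        then have ne': "t - t' \<noteq> 0" by simp
        have "z = (\<lambda>i. (1 / (t - t')) * (w' i - w i))"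
        proof
          fix i
          have "(t - t') * z i = w' i - w i" using eq[of i] ss by (simp add: algebra_simps)
          then show "z i = (1 / (t - t')) * (w' i - w i)"
            using ne' by (simp add: field_simps)
        qed
        then show False using Wscale[OF dW, of "1 / (t - t')"] zW by metis
      qed
      have "w = w'" using eq ss tt by (simp add: fun_eq_iff)
      then show "x = y" using xs ys ss tt by simp
    qed
    have sub: "\<phi> ` (UNIV \<times> UNIV \<times> W) \<subseteq> pg_vecs n"
      using a z Wvecs unfolding \<phi>_def by (auto simp: pg_vecs_def)
    have "card ((UNIV::'a set) \<times> (UNIV::'a set) \<times> W) \<le> card (pg_vecs n :: (nat\<Rightarrow>'a) set)"
      using card_inj_on_le[OF inj sub finvecs] .
    also have "\<dots> \<le> q ^ Suc n" using cardvecs .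
    finally have le: "q * (q * card W) \<le> q ^ Suc n" using cardF by (simp add: card_cartesian_product)
    have "q ^ Suc n = q * (q * q ^ (n - 1))" using assms(1) by (cases n) auto
    also have "\<dots> < q * (q * card W)" using bigW q3 by (intro mult_strict_left_mono) auto
    finally show False using le by linarith
  qed
  have hyp: "\<exists>c. (\<exists>i\<le>n. c i \<noteq> 0) \<and> (\<forall>v\<in>pg_vecs n. (\<Sum>i\<le>n. c i * v i) = 0 \<longrightarrow> v \<in> W)"
  proof (cases "pg_vecs n \<subseteq> W")
    case True then show ?thesis by (intro exI[of _ "\<lambda>i. if i = 0 then 1 else 0"]) auto
  next
    case False
    then obtain z where z: "z \<in> pg_vecs n" "z \<notin> W" by blast
    define e where "e = (\<lambda>i::nat. \<lambda>j::nat. if j = i then (1::'a) else 0)"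
    have ev: "\<And>i. i \<le> n \<Longrightarrow> e i \<in> pg_vecs n" by (auto simp: e_def pg_vecs_def)
    define lam where "lam = (\<lambda>i. SOME l. (\<lambda>j. e i j - l * z j) \<in> W)"
    have lam: "\<And>i. i \<le> n \<Longrightarrow> (\<lambda>j. e i j - lam i * z j) \<in> W"
    proof -
      fix i assume "i \<le> n"
      from key[OF ev[OF this] z] show "(\<lambda>j. e i j - lam i * z j) \<in> W"
        unfolding lam_def by (rule someI_ex)
    qed
    have Wsum: "\<And>(I::nat set) (f::nat \<Rightarrow> nat \<Rightarrow> 'a). finite I \<Longrightarrow> (\<forall>i\<in>I. f i \<in> W) \<Longrightarrow> (\<lambda>j. \<Sum>i\<in>I. f i j) \<in> W"
    proof -
      fix I :: "nat set" and f :: "nat \<Rightarrow> nat \<Rightarrow> 'a"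
      assume "finite I" "\<forall>i\<in>I. f i \<in> W"
      then show "(\<lambda>j. \<Sum>i\<in>I. f i j) \<in> W"
      proof (induction I rule: finite_induct)
        case empty then show ?case using W0 by (simp add: Z_def)
      next
        case (insert x F)
        then have "(\<lambda>j. 1 * f x j + 1 * (\<lambda>j. \<Sum>i\<in>F. f i j) j) \<in> W" by (intro Wlin) auto
        then show ?case using insert by simp
      qed
    qed
    define g where "g v = (\<Sum>i\<le>n. lam i * v i)" for v :: "nat \<Rightarrow> 'a"
    have gW: "\<And>v::nat\<Rightarrow>'a. v \<in> pg_vecs n \<Longrightarrow> (\<lambda>j. v j - g v * z j) \<in> W"
    proof -
      fix v :: "nat \<Rightarrow> 'a" assume v: "v \<in> pg_vecs n"
      have "(\<lambda>j. \<Sum>i\<le>n. v i * (e i j - lam i * z j)) \<in> W"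
        using lam Wscale by (intro Wsum) auto
      moreover have "(\<lambda>j. \<Sum>i\<le>n. v i * (e i j - lam i * z j)) = (\<lambda>j. v j - g v * z j)"
      proof
        fix j
        have "(\<Sum>i\<le>n. v i * (e i j - lam i * z j)) = (\<Sum>i\<le>n. v i * e i j) - (\<Sum>i\<le>n. lam i * v i) * z j"
          by (simp add: sum_subtractf sum_distrib_right right_diff_distrib mult.assoc mult.left_commute)
        also have "(\<Sum>i\<le>n. v i * e i j) = (\<Sum>i\<le>n. if j = i then v j else 0)"
          by (rule sum.cong) (auto simp: e_def)
        also have "\<dots> = v j"
          using v by (cases "j \<le> n") (auto simp: pg_vecs_def)
        finally show "(\<Sum>i\<le>n. v i * (e i j - lam i * z j)) = v j - g v * z j" by (simp add: g_def)
      qed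
      ultimately show "(\<lambda>j. v j - g v * z j) \<in> W" by simp
    qed
    have "\<exists>i\<le>n. lam i \<noteq> 0"
    proof (rule ccontr)
      assume "\<not> (\<exists>i\<le>n. lam i \<noteq> 0)" then have "g z = 0" by (simp add: g_def)
      then have "z \<in> W" using gW[OF z(1)] by simp
      with z show False by simp
    qed
    moreover have "\<forall>v\<in>pg_vecs n. (\<Sum>i\<le>n. lam i * v i) = 0 \<longrightarrow> v \<in> W"
    proof (intro ballI impI)
      fix v :: "nat \<Rightarrow> 'a" assume v: "v \<in> pg_vecs n" and "(\<Sum>i\<le>n. lam i * v i) = 0"
      then have "g v = 0" by (simp add: g_def)
      then show "v \<in> W" using gW[OF v] by simp
    qed
    ultimately show ?thesis by blast
  qed
  then obtain c where cnz: "\<exists>i\<le>n. c i \<noteq> 0"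
    and cW: "\<forall>v\<in>pg_vecs n. (\<Sum>i\<le>n. c i * v i) = 0 \<longrightarrow> v \<in> W" by blast
  define H where "H = {P \<in> pg_points n. P \<subseteq> {v. (\<Sum>i\<le>n. c i * v i) = 0}}"
  have Hhyp: "H \<in> pg_hyperplanes n" unfolding H_def pg_hyperplanes_def using cnz by blast
  have HB: "H \<subseteq> B"
  proof
    fix P assume P: "P \<in> H"
    then obtain u :: "nat \<Rightarrow> 'a" where u: "u \<in> pg_vecs n" "u \<noteq> Z" "P = pg_span1 u"
      unfolding H_def pg_points_def Z_def by auto
    have "u \<in> P" using u span1_self by simp
    then have "(\<Sum>i\<le>n. c i * u i) = 0" using P unfolding H_def by auto
    then have "u \<in> C" using cW u WC by auto
    then show "P \<in> B" using CB u by simp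
  qed
  have Hblk: "blocking_set n H"
    unfolding blocking_set_def
  proof (intro conjI ballI)
    show "H \<subseteq> pg_points n" unfolding H_def by auto
    fix L :: "(nat \<Rightarrow> 'a) set set" assume "L \<in> pg_lines n"
    then obtain u w :: "nat \<Rightarrow> 'a" where L: "L = {P \<in> pg_points n. P \<subseteq> pg_span2 u w}" and u: "u \<in> pg_vecs n"
      and w: "w \<in> pg_vecs n" and uw: "pg_span1 u \<noteq> pg_span1 w" and unz: "u \<noteq> Z" and wnz: "w \<noteq> Z"
      unfolding pg_lines_def Z_def by blast
    define \<alpha> where "\<alpha> = (\<Sum>i\<le>n. c i * u i)"
    define \<beta> where "\<beta> = (\<Sum>i\<le>n. c i * w i)"
    define x where "x = (if \<alpha> = 0 \<and> \<beta> = 0 then u else (\<lambda>i. \<beta> * u i - \<alpha> * w i))"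
    have xT: "\<alpha> = 0 \<and> \<beta> = 0 \<Longrightarrow> x = u" unfolding x_def by (rule if_P)
    have xF: "\<not> (\<alpha> = 0 \<and> \<beta> = 0) \<Longrightarrow> x = (\<lambda>i. \<beta> * u i - \<alpha> * w i)"
      unfolding x_def by (rule if_not_P)
    have xab: "\<exists>a b. x = (\<lambda>i. a * u i + b * w i)"
    proof (cases "\<alpha> = 0 \<and> \<beta> = 0")
      case True
      then have "x = (\<lambda>i. 1 * u i + 0 * w i)" using xT by simp
      then show ?thesis by blast
    next
      case False
      then have "x = (\<lambda>i. \<beta> * u i + (-\<alpha>) * w i)" using xF by simp
      then show ?thesis by blast
    qed
    have xv: "x \<in> pg_vecs n" using xab vecs_lin[OF u w] by auto
    have xnz: "x \<noteq> Z"
    proof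
      assume x0: "x = Z"
      show False
      proof (cases "\<alpha> = 0 \<and> \<beta> = 0")
        case True then show False using x0 unz xT by simp
      next
        case False
        then have eq: "\<And>i. \<beta> * u i = \<alpha> * w i" using x0 xF[OF False] by (simp add: Z_def fun_eq_iff)
        show False
        proof (cases "\<beta> = 0")
          case True
          then have "\<alpha> \<noteq> 0" using False by simp
          then have "w = Z" using eq True by (simp add: Z_def fun_eq_iff)
          with wnz show False by simp
        next
          case bnz: False
          have ueq: "u = (\<lambda>i. (\<alpha>/\<beta>) * w i)" using eq bnz by (simp add: fun_eq_iff field_simps)
          have "\<alpha> \<noteq> 0"
          proof
            assume "\<alpha> = 0" then have "u = Z" using ueq by (simp add: Z_def)
            with unz show False by simp
          qed
          then have "pg_span1 u = pg_span1 w" using span1_scale[of "\<alpha>/\<beta>" w] ueq bnz by simp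
          with uw show False by simp
        qed
      qed
    qed
    have ker: "pg_span1 x \<subseteq> {v. (\<Sum>i\<le>n. c i * v i) = 0}"
    proof
      fix y assume "y \<in> pg_span1 x"
      then obtain d where y: "y = (\<lambda>i. d * x i)" unfolding span1_mem by blast
      show "y \<in> {v. (\<Sum>i\<le>n. c i * v i) = 0}"
      proof (cases "\<alpha> = 0 \<and> \<beta> = 0")
        case True
        have "(\<Sum>i\<le>n. c i * (d * u i)) = d * \<alpha>"
          by (simp add: \<alpha>_def sum_distrib_left mult.left_commute)
        then show ?thesis using y True xT by simp
      next
        case False
        have "(\<Sum>i\<le>n. c i * (d * (\<beta> * u i - \<alpha> * w i)))
            = (\<Sum>i\<le>n. (d*\<beta>) * (c i * u i) - (d*\<alpha>) * (c i * w i))"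
          by (rule sum.cong) (auto simp: algebra_simps)
        also have "\<dots> = (d*\<beta>) * \<alpha> - (d*\<alpha>) * \<beta>"
          by (simp add: sum_subtractf sum_distrib_left \<alpha>_def \<beta>_def)
        also have "\<dots> = 0" by simp
        finally show ?thesis using y xF[OF False] by simp
      qed
    qed
    obtain a b where ab: "x = (\<lambda>i. a * u i + b * w i)" using xab by blast
    have "pg_span1 x \<in> L" unfolding L using xv xnz span1_pt[of x n] span1_sub_span2[of a u b w] ab
      unfolding Z_def by simp
    moreover have "pg_span1 x \<in> H" unfolding H_def using ker xv xnz span1_pt[of x n]
      unfolding Z_def by simp
    ultimately show "L \<inter> H \<noteq> {}" by blast
  qed
  have "H = B"
  proof (rule ccontr)
    assume "H \<noteq> B" then have "H \<subset> B" using HB by auto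
    then show False using minB Hblk by blast
  qed
  then show ?thesis using Hhyp by simp
qed

end
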